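(* Let $R_1$ and $R_2$ be rings, let $S$ be a subring of $R_2$, and let $F: R_1 \to 2^{R_2}$ be a powerful set-valued homomorphism such that $F(0_{R_1}) \subseteq S$, where $0_{R_1}$ is the zero element of $R_1$. Then the set $\underline{F}(S) = \{x \in R_1 : F(x) \subseteq S\}$ is a subring of $R_1$.
   Context: For a ring $R$, $2^{R}$ denotes the set of subsets of $R$. For $A, B \subseteq R$ write $A + B = \{a+b : a \in A, b \in B\}$, $AB = \{ab : a \in A, b \in B\}$ and $-A = \{-a : a \in A\}$. A powerful set-valued homomorphism from a ring $R_1$ to $2^{R_2}$ is a map $F: R_1 \to 2^{R_2}$ such that for all $x, y \in R_1$: $F(x+y) = F(x) + F(y)$, $F(xy) = F(x)F(y)$, and $F(-x) = -F(x)$. A subring means a nonempty subset closed under addition, multiplication and additive inverses. *)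

theory Defs
  imports Main
begin

definition set_add :: "'a::ring set \<Rightarrow> 'a set \<Rightarrow> 'a set" where
  "set_add A B = {a + b | a b. a \<in> A \<and> b \<in> B}"

definition set_mul :: "'a::ring set \<Rightarrow> 'a set \<Rightarrow> 'a set" where
  "set_mul A B = {a * b | a b. a \<in> A \<and> b \<in> B}"

definition set_neg :: "'a::ring set \<Rightarrow> 'a set" where
  "set_neg A = {- a | a. a \<in> A}"

definition powerful_set_hom :: "('a::ring \<Rightarrow> 'b::ring set) \<Rightarrow> bool" where
  "powerful_set_hom F \<longleftrightarrow>
     (\<forall>x y. F (x + y) = set_add (F x) (F y) \<and> F (x * y) = set_mul (F x) (F y)
            \<and> F (- x) = set_neg (F x))"

definition is_subring :: "'a::ring set \<Rightarrow> bool" where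
  "is_subring S \<longleftrightarrow> S \<noteq> {} \<and>
     (\<forall>a\<in>S. \<forall>b\<in>S. a + b \<in> S \<and> a * b \<in> S) \<and> (\<forall>a\<in>S. - a \<in> S)"

definition lower_approx :: "('a::ring \<Rightarrow> 'b::ring set) \<Rightarrow> 'b set \<Rightarrow> 'a set" where
  "lower_approx F S = {x. F x \<subseteq> S}"

end

theory Submission
  imports Defs
begin

theorem theorem4p1:
  fixes F :: "'a::ring \<Rightarrow> 'b::ring set" and S :: "'b set"
  assumes "is_subring S"
    and "powerful_set_hom F"
    and "F 0 \<subseteq> S"
  shows "is_subring (lower_approx F S)"
proof -
  have S: "\<And>a b. a \<in> S \<Longrightarrow> b \<in> S \<Longrightarrow> a + b \<in> S \<and> a * b \<in> S"
    "\<And>a. a \<in> S \<Longrightarrow> - a \<in> S"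
    using assms(1) unfolding is_subring_def by auto
  have H: "\<And>x y. F (x + y) = set_add (F x) (F y)" "\<And>x y. F (x * y) = set_mul (F x) (F y)"
    "\<And>x. F (- x) = set_neg (F x)"
    using assms(2) unfolding powerful_set_hom_def by auto
  have "0 \<in> lower_approx F S" using assms(3) unfolding lower_approx_def by auto
  moreover have "\<forall>a\<in>lower_approx F S. \<forall>b\<in>lower_approx F S.
      a + b \<in> lower_approx F S \<and> a * b \<in> lower_approx F S"
  proof (intro ballI conjI)
    fix a b assume a: "a \<in> lower_approx F S" and b: "b \<in> lower_approx F S"
    hence a': "F a \<subseteq> S" and b': "F b \<subseteq> S" unfolding lower_approx_def by auto
    show "a + b \<in> lower_approx F S" unfolding lower_approx_def mem_Collect_eq H set_add_def
      using a' b' S(1) by blast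
    show "a * b \<in> lower_approx F S" unfolding lower_approx_def mem_Collect_eq H set_mul_def
      using a' b' S(1) by blast
  qed
  moreover have "\<forall>a\<in>lower_approx F S. - a \<in> lower_approx F S"
    unfolding lower_approx_def mem_Collect_eq H set_neg_def using S by (auto 0 3)
  ultimately show ?thesis unfolding is_subring_def by blast
qed

end
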